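(* Let $G$ be a reduced abelian group which is super directly finite and is not torsion-free. Then every $p$-primary component of $G$ (i.e., of its torsion subgroup) is finite.
   Context: All groups are abelian. A group $G$ is directly finite if there is no decomposition $G=A\oplus C$ with $C\ne0$ and $A\cong G$; $G$ is super directly finite if every epimorphic image of $G$ is directly finite. A group is reduced if it has no nonzero divisible subgroup. *)

theory Defs
  imports "HOL-Algebra.Algebra" "HOL-Computational_Algebra.Primes"
begin

text \<open>Abelian groups are modelled by HOL-Algebra's comm_group (written multiplicatively).\<close>

definition directly_finite :: "('a, 'b) monoid_scheme \<Rightarrow> bool" where
  "directly_finite G \<longleftrightarrow>
     \<not> (\<exists>A C. subgroup A G \<and> subgroup C G \<and> A \<inter> C = {\<one>\<^bsub>G\<^esub>} \<and>
              A <#>\<^bsub>G\<^esub> C = carrier G \<and> C \<noteq> {\<one>\<^bsub>G\<^esub>} \<and>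
              G\<lparr>carrier := A\<rparr> \<cong> G)"

text \<open>Super directly finite: every epimorphic image is directly finite. Epimorphic
  images of G are (up to isomorphism) exactly the quotients G/N.\<close>
definition super_directly_finite :: "('a, 'b) monoid_scheme \<Rightarrow> bool" where
  "super_directly_finite G \<longleftrightarrow> (\<forall>N. subgroup N G \<longrightarrow> directly_finite (G Mod N))"

definition divisible_subgroup :: "('a, 'b) monoid_scheme \<Rightarrow> 'a set \<Rightarrow> bool" where
  "divisible_subgroup G D \<longleftrightarrow>
     (\<forall>x\<in>D. \<forall>n::nat. n > 0 \<longrightarrow> (\<exists>y\<in>D. y [^]\<^bsub>G\<^esub> n = x))"

definition reduced :: "('a, 'b) monoid_scheme \<Rightarrow> bool" where
  "reduced G \<longleftrightarrow>
     (\<forall>D. subgroup D G \<and> divisible_subgroup G D \<longrightarrow> D = {\<one>\<^bsub>G\<^esub>})"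

definition torsion_free :: "('a, 'b) monoid_scheme \<Rightarrow> bool" where
  "torsion_free G \<longleftrightarrow>
     (\<forall>x\<in>carrier G. \<forall>n::nat. n > 0 \<and> x [^]\<^bsub>G\<^esub> n = \<one>\<^bsub>G\<^esub> \<longrightarrow> x = \<one>\<^bsub>G\<^esub>)"

definition primary_component :: "('a, 'b) monoid_scheme \<Rightarrow> nat \<Rightarrow> 'a set" where
  "primary_component G p =
     {x \<in> carrier G. \<exists>k::nat. x [^]\<^bsub>G\<^esub> (p ^ k) = \<one>\<^bsub>G\<^esub>}"

end

theory Submission
  imports Defs
begin


lemma not_df_from_fg:
  assumes H: "group H"
    and f: "f \<in> hom H H" and g: "g \<in> hom H H"
    and gf: "\<And>x. x \<in> carrier H \<Longrightarrow> g (f x) = x"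
    and y: "y \<in> carrier H" "y \<notin> f ` carrier H"
  shows "\<not> directly_finite H"
proof -
  interpret H: group H by (rule H)
  interpret F: group_hom H H f by (unfold_locales, rule f)
  interpret Gh: group_hom H H g by (unfold_locales, rule g)
  define A where "A = f ` carrier H"
  define C where "C = kernel H H g"
  have sA: "subgroup A H" unfolding A_def by (rule F.img_is_subgroup)
  have sC: "subgroup C H" unfolding C_def by (rule Gh.subgroup_kernel)
  have fc: "\<And>x. x \<in> carrier H \<Longrightarrow> f x \<in> carrier H" using f by (auto simp: hom_def)
  have gc: "\<And>x. x \<in> carrier H \<Longrightarrow> g x \<in> carrier H" using g by (auto simp: hom_def)
  have AC: "A \<inter> C = {\<one>\<^bsub>H\<^esub>}"
  proof
    show "A \<inter> C \<subseteq> {\<one>\<^bsub>H\<^esub>}"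
    proof
      fix x assume "x \<in> A \<inter> C"
      then obtain h where h: "h \<in> carrier H" "x = f h" "g x = \<one>\<^bsub>H\<^esub>"
        by (auto simp: A_def C_def kernel_def)
      then have "h = \<one>\<^bsub>H\<^esub>" using gf by auto
      then show "x \<in> {\<one>\<^bsub>H\<^esub>}" using h by simp
    qed
    show "{\<one>\<^bsub>H\<^esub>} \<subseteq> A \<inter> C" using sA sC subgroup.one_closed by blast
  qed
  have decomp: "\<And>z. z \<in> carrier H \<Longrightarrow> inv\<^bsub>H\<^esub> (f (g z)) \<otimes>\<^bsub>H\<^esub> z \<in> C"
  proof -
    fix z assume z: "z \<in> carrier H"
    have "g (inv\<^bsub>H\<^esub> (f (g z)) \<otimes>\<^bsub>H\<^esub> z) = inv\<^bsub>H\<^esub> (g (f (g z))) \<otimes>\<^bsub>H\<^esub> g z"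
      using z fc gc by (simp add: Gh.hom_inv Gh.hom_mult)
    also have "\<dots> = \<one>\<^bsub>H\<^esub>" using z gf gc by simp
    finally show "inv\<^bsub>H\<^esub> (f (g z)) \<otimes>\<^bsub>H\<^esub> z \<in> C" using z fc gc by (simp add: C_def kernel_def)
  qed
  have prod: "A <#>\<^bsub>H\<^esub> C = carrier H"
  proof
    show "A <#>\<^bsub>H\<^esub> C \<subseteq> carrier H" using sA sC by (simp add: H.set_mult_closed subgroup.subset)
    show "carrier H \<subseteq> A <#>\<^bsub>H\<^esub> C"
    proof
      fix z assume z: "z \<in> carrier H"
      have "z = f (g z) \<otimes>\<^bsub>H\<^esub> (inv\<^bsub>H\<^esub> (f (g z)) \<otimes>\<^bsub>H\<^esub> z)"
        using z fc gc by (simp add: H.m_assoc[symmetric])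
      moreover have "f (g z) \<in> A" using z gc by (auto simp: A_def)
      ultimately show "z \<in> A <#>\<^bsub>H\<^esub> C" using decomp[OF z] unfolding set_mult_def by blast
    qed
  qed
  have Cne: "C \<noteq> {\<one>\<^bsub>H\<^esub>}"
  proof
    assume "C = {\<one>\<^bsub>H\<^esub>}"
    then have "inv\<^bsub>H\<^esub> (f (g y)) \<otimes>\<^bsub>H\<^esub> y = \<one>\<^bsub>H\<^esub>" using decomp[OF y(1)] by auto
    moreover have "y = f (g y) \<otimes>\<^bsub>H\<^esub> (inv\<^bsub>H\<^esub> (f (g y)) \<otimes>\<^bsub>H\<^esub> y)"
      using y(1) fc gc by (simp add: H.m_assoc[symmetric])
    ultimately have "y = f (g y)" using y(1) fc gc by simp
    then show False using y gc by auto
  qed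
  have iso: "g \<in> iso (H\<lparr>carrier := A\<rparr>) H"
  proof (rule isoI)
    show "g \<in> hom (H\<lparr>carrier := A\<rparr>) H"
      using g subgroup.subset[OF sA] by (intro homI) (auto intro!: Gh.hom_mult)
    show "bij_betw g (carrier (H\<lparr>carrier := A\<rparr>)) (carrier H)"
      unfolding bij_betw_def
    proof
      show "inj_on g (carrier (H\<lparr>carrier := A\<rparr>))"
        by (auto simp: A_def inj_on_def gf)
      show "g ` carrier (H\<lparr>carrier := A\<rparr>) = carrier H"
      proof (rule equalityI)
        show "g ` carrier (H\<lparr>carrier := A\<rparr>) \<subseteq> carrier H" using gc subgroup.subset[OF sA] by auto
      next
        show "carrier H \<subseteq> g ` carrier (H\<lparr>carrier := A\<rparr>)"
        proof
        fix h assume h: "h \<in> carrier H"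
        then have "h = g (f h)" using gf by simp
        moreover have "f h \<in> carrier (H\<lparr>carrier := A\<rparr>)" using h by (simp add: A_def)
        ultimately show "h \<in> g ` carrier (H\<lparr>carrier := A\<rparr>)" by blast
      qed
      qed
    qed
  qed
  show ?thesis unfolding directly_finite_def is_iso_def
    using sA sC AC prod Cne iso by blast
qed



definition Wp :: "nat \<Rightarrow> (nat \<Rightarrow> int) monoid" where
  "Wp p = \<lparr>carrier = {c. (\<forall>i. 0 \<le> c i \<and> c i < int p) \<and> finite {i. c i \<noteq> 0}},
           monoid.mult = (\<lambda>a b i. (a i + b i) mod int p), one = (\<lambda>i. 0)\<rparr>"

lemma Wp_simps [simp]:
  "carrier (Wp p) = {c. (\<forall>i. 0 \<le> c i \<and> c i < int p) \<and> finite {i. c i \<noteq> 0}}"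
  "monoid.mult (Wp p) = (\<lambda>a b i. (a i + b i) mod int p)"
  "one (Wp p) = (\<lambda>i. 0)"
  by (simp_all add: Wp_def)

lemma Wp_group:
  assumes p: "p > 0"
  shows "comm_group (Wp p)"
proof -
  have "group (Wp p)"
  proof (rule groupI)
    fix x y assume x: "x \<in> carrier (Wp p)" and y: "y \<in> carrier (Wp p)"
    have "{i. (x i + y i) mod int p \<noteq> 0} \<subseteq> {i. x i \<noteq> 0} \<union> {i. y i \<noteq> 0}" by auto
    then have "finite {i. (x i + y i) mod int p \<noteq> 0}" by (rule finite_subset) (use x y in simp)
    then show "x \<otimes>\<^bsub>Wp p\<^esub> y \<in> carrier (Wp p)" using p by simp
  next
    show "\<one>\<^bsub>Wp p\<^esub> \<in> carrier (Wp p)" using p by simp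
  next
    fix x y z assume x: "x \<in> carrier (Wp p)" and y: "y \<in> carrier (Wp p)" and z: "z \<in> carrier (Wp p)"
    show "x \<otimes>\<^bsub>Wp p\<^esub> y \<otimes>\<^bsub>Wp p\<^esub> z = x \<otimes>\<^bsub>Wp p\<^esub> (y \<otimes>\<^bsub>Wp p\<^esub> z)"
      by (simp add: mod_add_left_eq mod_add_right_eq add.assoc)
  next
    fix x assume x: "x \<in> carrier (Wp p)"
    show "\<one>\<^bsub>Wp p\<^esub> \<otimes>\<^bsub>Wp p\<^esub> x = x" using x by (auto intro!: ext)
  next
    fix x assume x: "x \<in> carrier (Wp p)"
    show "\<exists>y\<in>carrier (Wp p). y \<otimes>\<^bsub>Wp p\<^esub> x = \<one>\<^bsub>Wp p\<^esub>"
    proof (intro bexI)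
      show "(\<lambda>i. (- x i) mod int p) \<otimes>\<^bsub>Wp p\<^esub> x = \<one>\<^bsub>Wp p\<^esub>"
        by (auto intro!: ext simp: mod_add_left_eq)
      have "{i. (- x i) mod int p \<noteq> 0} \<subseteq> {i. x i \<noteq> 0}" by auto
      then have "finite {i. (- x i) mod int p \<noteq> 0}" by (rule finite_subset) (use x in simp)
      then show "(\<lambda>i. (- x i) mod int p) \<in> carrier (Wp p)" using p by simp
    qed
  qed
  then show ?thesis
    by (rule group.group_comm_groupI) (auto intro!: ext simp: add.commute)
qed

lemma Wp_pow:
  assumes "c \<in> carrier (Wp p)"
  shows "c [^]\<^bsub>Wp p\<^esub> (n::nat) = (\<lambda>i. (int n * c i) mod int p)"
proof (induction n)
  case (Suc n)
  have "\<And>i. (int n * c i mod int p + c i) mod int p = (int (Suc n) * c i) mod int p"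
  proof -
    fix i
    have "int (Suc n) * c i = int n * c i + c i" by (simp add: distrib_right)
    then show "(int n * c i mod int p + c i) mod int p = (int (Suc n) * c i) mod int p"
      by (simp add: mod_add_left_eq)
  qed
  then show ?case using Suc by (simp add: fun_eq_iff)
qed simp

definition sh :: "(nat \<Rightarrow> int) \<Rightarrow> nat \<Rightarrow> int" where
  "sh c = (\<lambda>i. if i = 0 then 0 else c (i - 1))"
definition ush :: "(nat \<Rightarrow> int) \<Rightarrow> nat \<Rightarrow> int" where
  "ush c = (\<lambda>i. c (Suc i))"

lemma sh_hom: assumes "p > 0" shows "sh \<in> hom (Wp p) (Wp p)"
proof (rule homI)
  fix c assume c: "c \<in> carrier (Wp p)"
  have "{i. sh c i \<noteq> 0} \<subseteq> Suc ` {i. c i \<noteq> 0}"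
    by (auto simp: sh_def image_iff split: if_splits) (metis Suc_pred neq0_conv)
  then have "finite {i. sh c i \<noteq> 0}" by (rule finite_subset) (use c in simp)
  then show "sh c \<in> carrier (Wp p)" using c assms by (simp add: sh_def)
qed (auto simp: sh_def intro!: ext)

lemma ush_hom: assumes "p > 0" shows "ush \<in> hom (Wp p) (Wp p)"
proof (rule homI)
  fix c assume c: "c \<in> carrier (Wp p)"
  have "{i. ush c i \<noteq> 0} \<subseteq> (\<lambda>i. i - 1) ` {i. c i \<noteq> 0}"
    apply (auto simp: ush_def image_iff)
    by (rule_tac x="Suc x" in exI) simp
  then have "finite {i. ush c i \<noteq> 0}" by (rule finite_subset) (use c in simp)
  then show "ush c \<in> carrier (Wp p)" using c assms by (simp add: ush_def)
qed (auto simp: ush_def intro!: ext)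

lemma Wp_not_df_iso:
  assumes H: "group H" and p: "p > 1" and phi: "\<phi> \<in> iso H (Wp p)"
  shows "\<not> directly_finite H"
proof -
  interpret H: group H by (rule H)
  have W: "comm_group (Wp p)" using p Wp_group by simp
  define \<psi> where "\<psi> = inv_into (carrier H) \<phi>"
  have psi: "\<psi> \<in> iso (Wp p) H" unfolding \<psi>_def by (rule H.iso_set_sym[OF phi])
  have phh: "\<phi> \<in> hom H (Wp p)" and psh: "\<psi> \<in> hom (Wp p) H"
    using phi psi by (simp_all add: iso_imp_homomorphism)
  have psphi: "\<And>x. x \<in> carrier H \<Longrightarrow> \<psi> (\<phi> x) = x"
    using phi unfolding \<psi>_def iso_def bij_betw_def by (auto intro: inv_into_f_f)
  have phpsi: "\<And>w. w \<in> carrier (Wp p) \<Longrightarrow> \<phi> (\<psi> w) = w"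
    using phi unfolding \<psi>_def iso_def bij_betw_def by (auto intro: f_inv_into_f)
  have phc: "\<And>x. x \<in> carrier H \<Longrightarrow> \<phi> x \<in> carrier (Wp p)" using phh by (auto simp: hom_def)
  have psc: "\<And>x. x \<in> carrier (Wp p) \<Longrightarrow> \<psi> x \<in> carrier H" using psh by (auto simp: hom_def)
  have ushsh: "\<And>x. ush (sh x) = x" by (auto simp: sh_def ush_def)
  have shh: "sh \<in> hom (Wp p) (Wp p)" by (rule sh_hom) (use p in simp)
  have ushh: "ush \<in> hom (Wp p) (Wp p)" by (rule ush_hom) (use p in simp)
  have shc: "\<And>x. x \<in> carrier (Wp p) \<Longrightarrow> sh x \<in> carrier (Wp p)" using shh by (auto simp: hom_def)
  define f where "f = \<psi> \<circ> sh \<circ> \<phi>"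
  define g where "g = \<psi> \<circ> ush \<circ> \<phi>"
  have fh: "f \<in> hom H H" unfolding f_def o_assoc[symmetric]
    by (intro hom_compose[OF hom_compose[OF phh shh] psh])
  have gh: "g \<in> hom H H" unfolding g_def o_assoc[symmetric]
    by (intro hom_compose[OF hom_compose[OF phh ushh] psh])
  have gf: "\<And>x. x \<in> carrier H \<Longrightarrow> g (f x) = x"
  proof -
    fix x assume x: "x \<in> carrier H"
    have "\<phi> (\<psi> (sh (\<phi> x))) = sh (\<phi> x)" by (rule phpsi[OF shc[OF phc[OF x]]])
    then show "g (f x) = x" using x by (simp add: f_def g_def ushsh psphi)
  qed
  define e where "e = (\<lambda>i::nat. if i = 0 then (1::int) else 0)"
  have ec: "e \<in> carrier (Wp p)"
  proof -
    have "{i. e i \<noteq> 0} \<subseteq> {0}" by (auto simp: e_def)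
    then have "finite {i. e i \<noteq> 0}" by (rule finite_subset) simp
    then show ?thesis using p by (simp add: e_def)
  qed
  have "\<psi> e \<notin> f ` carrier H"
  proof
    assume "\<psi> e \<in> f ` carrier H"
    then obtain x where x: "x \<in> carrier H" "\<psi> e = \<psi> (sh (\<phi> x))" by (auto simp: f_def)
    then have "\<phi> (\<psi> e) = \<phi> (\<psi> (sh (\<phi> x)))" by simp
    then have "e = sh (\<phi> x)" using phpsi[OF ec] phpsi[OF shc[OF phc[OF x(1)]]] by simp
    then show False by (auto simp: e_def sh_def dest: fun_cong[where x=0])
  qed
  then show ?thesis using not_df_from_fg[OF H fh gh gf] psc[OF ec] by blast
qed



lemma subgroup_npow: "subgroup K G \<Longrightarrow> x \<in> K \<Longrightarrow> x [^]\<^bsub>G\<^esub> (n::nat) \<in> K"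
  by (induction n) (auto intro: subgroup.one_closed subgroup.m_closed)

definition ee :: "nat \<Rightarrow> nat \<Rightarrow> int" where "ee n = (\<lambda>i. if i = n then 1 else 0)"

lemma ee_carrier: "p > 1 \<Longrightarrow> ee n \<in> carrier (Wp p)"
proof -
  assume p: "p > 1"
  have "{i. ee n i \<noteq> 0} \<subseteq> {n}" by (auto simp: ee_def)
  then have "finite {i. ee n i \<noteq> 0}" by (rule finite_subset) simp
  then show ?thesis using p by (simp add: ee_def)
qed

lemma Wp_gen:
  assumes p: "p > 1" and K: "subgroup K (Wp p)" and e: "\<And>n. ee n \<in> K"
  shows "carrier (Wp p) \<subseteq> K"
proof -
  have main: "\<forall>c \<in> carrier (Wp p). (\<forall>i\<ge>N. c i = 0) \<longrightarrow> c \<in> K" for N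
  proof (induction N)
    case 0
    show ?case
    proof (intro ballI impI)
      fix c assume "c \<in> carrier (Wp p)" "\<forall>i\<ge>0. c i = 0"
      then have "c = \<one>\<^bsub>Wp p\<^esub>" by (auto simp: fun_eq_iff)
      then show "c \<in> K" using K subgroup.one_closed by metis
    qed
  next
    case (Suc N)
    show ?case
    proof (intro ballI impI)
      fix c assume c: "c \<in> carrier (Wp p)" and z: "\<forall>i\<ge>Suc N. c i = 0"
      define c' where "c' = c(N := 0)"
      have "{i. c' i \<noteq> 0} \<subseteq> {i. c i \<noteq> 0}" by (auto simp: c'_def)
      then have "finite {i. c' i \<noteq> 0}" by (rule finite_subset) (use c in simp)
      then have c'c: "c' \<in> carrier (Wp p)" using c p by (simp add: c'_def)
      have "\<forall>i\<ge>N. c' i = 0" using z by (auto simp: c'_def)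
      then have c'K: "c' \<in> K" using Suc c'c by blast
      define k where "k = nat (c N)"
      have pw: "ee N [^]\<^bsub>Wp p\<^esub> k \<in> K" using subgroup_npow[OF K e] by blast
      have ck: "int k = c N" using c by (simp add: k_def)
      have pe: "ee N [^]\<^bsub>Wp p\<^esub> k = (\<lambda>i. (int k * ee N i) mod int p)"
        by (rule Wp_pow[OF ee_carrier[OF p]])
      have "c' \<otimes>\<^bsub>Wp p\<^esub> ee N [^]\<^bsub>Wp p\<^esub> k = c"
      proof (rule ext)
        fix i
        show "(c' \<otimes>\<^bsub>Wp p\<^esub> ee N [^]\<^bsub>Wp p\<^esub> k) i = c i"
          unfolding pe using c ck by (simp add: c'_def ee_def)
      qed
      then show "c \<in> K" using c'K pw K subgroup.m_closed by metis
    qed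
  qed
  show ?thesis
  proof
    fix c assume c: "c \<in> carrier (Wp p)"
    then have "finite {i. c i \<noteq> 0}" by simp
    then obtain N where "\<forall>i\<in>{i. c i \<noteq> 0}. i < N" using finite_nat_bounded by blast
    then have "\<forall>i\<ge>N. c i = 0" by force
    then show "c \<in> K" using main c by blast
  qed
qed



context comm_group
begin

lemma pc_mem: "x \<in> primary_component G p \<longleftrightarrow> x \<in> carrier G \<and> (\<exists>k::nat. x [^] (p ^ k) = \<one>)"
  by (simp add: primary_component_def)

lemma pow_pk_mono: "x \<in> carrier G \<Longrightarrow> x [^] ((p::nat) ^ k) = \<one> \<Longrightarrow> k \<le> l \<Longrightarrow> x [^] (p ^ l) = \<one>"
proof -
  assume x: "x \<in> carrier G" and k: "x [^] (p ^ k) = \<one>" and kl: "k \<le> l"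
  obtain j where "l = k + j" using kl le_Suc_ex by blast
  then have "x [^] (p ^ l) = (x [^] (p ^ k)) [^] (p ^ j)" using x by (simp add: nat_pow_pow power_add)
  then show ?thesis using k by simp
qed

lemma pc_subgroup: "subgroup (primary_component G p) G"
proof (rule subgroupI)
  show "primary_component G p \<subseteq> carrier G" by (auto simp: pc_mem)
  show "primary_component G p \<noteq> {}"
  proof -
    have "\<one> \<in> primary_component G p" by (simp add: pc_mem)
    then show ?thesis by blast
  qed
next
  fix a assume "a \<in> primary_component G p"
  then obtain k where a: "a \<in> carrier G" "a [^] (p ^ k) = \<one>" by (auto simp: pc_mem)
  then have "inv a [^] (p ^ k) = \<one>" by (simp add: nat_pow_inv)
  then show "inv a \<in> primary_component G p" using a by (auto simp: pc_mem)
next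
  fix a b assume "a \<in> primary_component G p" "b \<in> primary_component G p"
  then obtain k l where a: "a \<in> carrier G" "a [^] (p ^ k) = \<one>" and b: "b \<in> carrier G" "b [^] (p ^ l) = \<one>"
    by (auto simp: pc_mem)
  have "a [^] (p ^ (k + l)) = \<one>" by (rule pow_pk_mono[OF a]) simp
  moreover have "b [^] (p ^ (k + l)) = \<one>" by (rule pow_pk_mono[OF b]) simp
  ultimately have "(a \<otimes> b) [^] (p ^ (k + l)) = \<one>" using a b by (simp add: nat_pow_distrib)
  then show "a \<otimes> b \<in> primary_component G p" using a b by (auto simp: pc_mem)
qed

lemma pc_root: "b \<in> carrier G \<Longrightarrow> b [^] (p::nat) \<in> primary_component G p \<Longrightarrow> b \<in> primary_component G p"
proof -
  assume b: "b \<in> carrier G" and bp: "b [^] p \<in> primary_component G p"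
  then obtain k where "(b [^] p) [^] (p ^ k) = \<one>" by (auto simp: pc_mem)
  then have "b [^] (p ^ Suc k) = \<one>" using b by (simp add: nat_pow_pow)
  then show ?thesis using b unfolding pc_mem by blast
qed

lemma finite_exp:
  assumes "finite S" "S \<subseteq> primary_component G p"
  shows "\<exists>m. \<forall>r\<in>S. r [^] ((p::nat) ^ m) = \<one>"
  using assms
proof (induction S rule: finite_induct)
  case empty then show ?case by simp
next
  case (insert r S)
  then obtain m where m: "\<forall>s\<in>S. s [^] (p ^ m) = \<one>" by auto
  obtain k where k: "r \<in> carrier G" "r [^] (p ^ k) = \<one>" using insert(4) by (auto simp: pc_mem)
  have "\<forall>s\<in>insert r S. s [^] (p ^ (m + k)) = \<one>"
  proof
    fix s assume "s \<in> insert r S"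
    then show "s [^] (p ^ (m + k)) = \<one>"
    proof
      assume "s = r" then show ?thesis using pow_pk_mono[OF k] by simp
    next
      assume s: "s \<in> S"
      then have "s \<in> carrier G" using insert(4) by (auto simp: pc_mem)
      then show ?thesis using pow_pk_mono[of s p m "m + k"] m s by simp
    qed
  qed
  then show ?case by blast
qed

lemma pow_coprime_root:
  assumes x: "x \<in> carrier G" and xk: "x [^] ((p::nat) ^ k) = \<one>" and q: "coprime q p" "q > 0"
  shows "\<exists>r::nat. (x [^] r) [^] q = x"
proof -
  have "coprime q (p ^ k)" using q by simp
  then have "gcd q (p ^ k) = 1" by simp
  then obtain r t where rt: "q * r = p ^ k * t + 1" using bezout_nat[of q "p ^ k"] q by auto
  have "(x [^] r) [^] q = x [^] (p ^ k * t + 1)" using x rt by (simp add: nat_pow_pow mult.commute)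
  also have "\<dots> = (x [^] (p ^ k)) [^] t \<otimes> x" using x by (simp add: nat_pow_pow nat_pow_mult[symmetric])
  also have "\<dots> = x" using xk x by simp
  finally show ?thesis by blast
qed

end


lemma (in comm_group) idx_lemma:
  assumes red: "reduced G" and p: "Factorial_Ring.prime (p::nat)"
    and inf: "infinite (primary_component G p)"
    and F: "finite F" "F \<subseteq> carrier G"
  shows "\<exists>y\<in>carrier G. \<forall>z\<in>carrier G. \<forall>f\<in>F. y \<noteq> z [^] p \<otimes> f"
proof (rule ccontr)
  assume "\<not> ?thesis"
  then have cov: "\<And>y. y \<in> carrier G \<Longrightarrow> \<exists>z\<in>carrier G. \<exists>f\<in>F. y = z [^] p \<otimes> f" by blast
  have p0: "p > 0" using p prime_gt_0_nat by blast
  define A where "A = primary_component G p"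
  have sA: "subgroup A G" unfolding A_def by (rule pc_subgroup)
  have Ac: "\<And>a. a \<in> A \<Longrightarrow> a \<in> carrier G" using sA subgroup.subset by blast
  define F0 where "F0 = {f\<in>F. \<exists>r\<in>A. \<exists>z\<in>carrier G. r = z [^] p \<otimes> f}"
  define rep where "rep = (\<lambda>f. SOME r. r \<in> A \<and> (\<exists>z\<in>carrier G. r = z [^] p \<otimes> f))"
  define FA where "FA = rep ` F0"
  have rep: "rep f \<in> A \<and> (\<exists>z\<in>carrier G. rep f = z [^] p \<otimes> f)" if "f \<in> F0" for f
  proof -
    have "\<exists>r. r \<in> A \<and> (\<exists>z\<in>carrier G. r = z [^] p \<otimes> f)" using that unfolding F0_def by blast
    then show ?thesis unfolding rep_def by (rule someI_ex)
  qed
  have FAfin: "finite FA" unfolding FA_def F0_def using F(1) by simp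
  have FAA: "FA \<subseteq> A" unfolding FA_def using rep by blast
  have C: "\<exists>b\<in>A. \<exists>r\<in>FA. a = b [^] p \<otimes> r" if a: "a \<in> A" for a
  proof -
    obtain z f where zf: "z \<in> carrier G" "f \<in> F" "a = z [^] p \<otimes> f" using cov[OF Ac[OF a]] by blast
    have fc: "f \<in> carrier G" using zf F(2) by blast
    have fF0: "f \<in> F0" unfolding F0_def using zf a by blast
    obtain z' where z': "z' \<in> carrier G" "rep f = z' [^] p \<otimes> f" using rep[OF fF0] by blast
    have rA: "rep f \<in> A" using rep[OF fF0] by blast
    define b where "b = z \<otimes> inv z'"
    have bc: "b \<in> carrier G" using zf z' by (simp add: b_def)
    have "b [^] p \<otimes> rep f = z [^] p \<otimes> (inv z' [^] p \<otimes> z' [^] p) \<otimes> f"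
      using zf z' fc by (simp add: b_def nat_pow_distrib m_ac)
    also have "inv z' [^] p \<otimes> z' [^] p = \<one>" using z' by (simp add: nat_pow_inv)
    finally have eq: "b [^] p \<otimes> rep f = a" using zf z' fc by simp
    then have "b [^] p = a \<otimes> inv (rep f)" using bc Ac[OF rA] Ac[OF a]
      by (metis inv_solve_right nat_pow_closed)
    then have "b [^] p \<in> A" using a rA sA by (simp add: subgroup.m_closed subgroup.m_inv_closed)
    then have "b \<in> A" using pc_root[OF bc] unfolding A_def by blast
    then show ?thesis using eq rA unfolding FA_def using fF0 by blast
  qed
  obtain m where m: "\<And>r. r \<in> FA \<Longrightarrow> r [^] (p ^ m) = \<one>"
    using finite_exp[OF FAfin FAA[unfolded A_def]] by blast
  define D where "D = (\<lambda>a. a [^] (p ^ m)) ` A"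
  have DA: "D \<subseteq> A" unfolding D_def using subgroup_npow[OF sA] by blast
  have sD: "subgroup D G"
  proof (rule subgroupI)
    show "D \<subseteq> carrier G" using DA Ac by blast
    have "\<one> [^] (p ^ m) \<in> D" unfolding D_def using subgroup.one_closed[OF sA] by blast
    then show "D \<noteq> {}" by blast
  next
    fix x assume "x \<in> D"
    then obtain a where a: "a \<in> A" "x = a [^] (p ^ m)" unfolding D_def by blast
    then have "inv x = (inv a) [^] (p ^ m)" using Ac by (simp add: nat_pow_inv)
    moreover have "inv a \<in> A" using a sA by (simp add: subgroup.m_inv_closed)
    ultimately show "inv x \<in> D" unfolding D_def by blast
  next
    fix x y assume "x \<in> D" "y \<in> D"
    then obtain a b where a: "a \<in> A" "x = a [^] (p ^ m)" and b: "b \<in> A" "y = b [^] (p ^ m)"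
      unfolding D_def by blast
    then have "x \<otimes> y = (a \<otimes> b) [^] (p ^ m)" using Ac by (simp add: nat_pow_distrib)
    moreover have "a \<otimes> b \<in> A" using a b sA by (simp add: subgroup.m_closed)
    ultimately show "x \<otimes> y \<in> D" unfolding D_def by blast
  qed
  have Dp: "\<exists>y\<in>D. y [^] p = x" if x: "x \<in> D" for x
  proof -
    obtain a where a: "a \<in> A" "x = a [^] (p ^ m)" using x unfolding D_def by blast
    obtain b r where br: "b \<in> A" "r \<in> FA" "a = b [^] p \<otimes> r" using C[OF a(1)] by blast
    have bc: "b \<in> carrier G" and rc: "r \<in> carrier G" using br Ac FAA by auto
    have "x = (b [^] p) [^] (p ^ m) \<otimes> r [^] (p ^ m)" using a br bc rc by (simp add: nat_pow_distrib)
    also have "\<dots> = (b [^] (p ^ m)) [^] p" using m[OF br(2)] bc by (simp add: nat_pow_pow mult.commute)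
    finally have "(b [^] (p ^ m)) [^] p = x" by simp
    moreover have "b [^] (p ^ m) \<in> D" unfolding D_def using br by blast
    ultimately show ?thesis by blast
  qed
  have Dpj: "\<exists>y\<in>D. y [^] (p ^ j) = x" if x: "x \<in> D" for x j
  proof (induction j)
    case 0 then show ?case using x DA Ac by force
  next
    case (Suc j)
    then obtain y where y: "y \<in> D" "y [^] (p ^ j) = x" by blast
    obtain u where u: "u \<in> D" "u [^] p = y" using Dp[OF y(1)] by blast
    have uc: "u \<in> carrier G" using u DA Ac by blast
    have "u [^] (p ^ Suc j) = (u [^] p) [^] (p ^ j)" using uc by (simp add: nat_pow_pow)
    then have "u [^] (p ^ Suc j) = x" using u y by simp
    then show ?case using u by blast
  qed
  have Dq: "\<exists>y\<in>D. y [^] q = x" if x: "x \<in> D" and q: "coprime q p" "q > 0" for x q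
  proof -
    have xA: "x \<in> A" using x DA by blast
    then obtain k where k: "x [^] (p ^ k) = \<one>" unfolding A_def pc_mem by blast
    obtain r :: nat where "(x [^] r) [^] q = x" using pow_coprime_root[OF Ac[OF xA] k q] by blast
    moreover have "x [^] r \<in> D" using subgroup_npow[OF sD x] by blast
    ultimately show ?thesis by blast
  qed
  have "divisible_subgroup G D"
    unfolding divisible_subgroup_def
  proof (intro ballI allI impI)
    fix x and n :: nat assume x: "x \<in> D" and n: "n > 0"
    obtain q where nq: "n = p ^ multiplicity p n * q" "\<not> p dvd q"
      using n p by (metis multiplicity_decompose' not_prime_unit neq0_conv)
    have q0: "q > 0" using nq n by (metis gr0I mult_0_right)
    have cq: "coprime q p" using nq(2) p by (metis prime_imp_coprime coprime_commute)
    obtain u where u: "u \<in> D" "u [^] q = x" using Dq[OF x cq q0] by blast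
    obtain y where y: "y \<in> D" "y [^] (p ^ multiplicity p n) = u" using Dpj[OF u(1)] by blast
    have yc: "y \<in> carrier G" using y DA Ac by blast
    have "y [^] n = (y [^] (p ^ multiplicity p n)) [^] q" using yc nq(1) by (simp add: nat_pow_pow)
    then have "y [^] n = x" using y u by simp
    then show "\<exists>y\<in>D. y [^] n = x" using y by blast
  qed
  then have D1: "D = {\<one>}" using red sD unfolding reduced_def by blast
  have A1: "a [^] (p ^ m) = \<one>" if "a \<in> A" for a using that D1 unfolding D_def by blast
  define S where "S = rec_nat {\<one>} (\<lambda>j T. (\<lambda>(r, s). r [^] (p ^ j) \<otimes> s) ` (FA \<times> T))"
  have S0: "S 0 = {\<one>}" and SS: "\<And>j. S (Suc j) = (\<lambda>(r, s). r [^] (p ^ j) \<otimes> s) ` (FA \<times> S j)"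
    by (simp_all add: S_def)
  have Sfin: "finite (S j)" for j by (induction j) (simp_all add: S0 SS FAfin)
  have Sc: "S j \<subseteq> carrier G" for j
  proof (induction j)
    case (Suc j)
    have FAc: "\<And>r. r \<in> FA \<Longrightarrow> r \<in> carrier G" using FAA Ac by blast
    show ?case unfolding SS using Suc FAc by (auto intro!: m_closed)
  qed (simp add: S0)
  have Srep: "\<exists>b\<in>A. \<exists>s\<in>S j. a = b [^] (p ^ j) \<otimes> s" if a: "a \<in> A" for a j
  proof (induction j)
    case 0 then show ?case using a Ac by (force simp: S0)
  next
    case (Suc j)
    then obtain b s where bs: "b \<in> A" "s \<in> S j" "a = b [^] (p ^ j) \<otimes> s" by blast
    obtain c r where cr: "c \<in> A" "r \<in> FA" "b = c [^] p \<otimes> r" using C[OF bs(1)] by blast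
    have cc: "c \<in> carrier G" and rc: "r \<in> carrier G" using cr Ac FAA by auto
    have sc: "s \<in> carrier G" using bs Sc by blast
    have "a = c [^] (p ^ Suc j) \<otimes> (r [^] (p ^ j) \<otimes> s)"
      using bs cr cc rc sc by (simp add: nat_pow_distrib nat_pow_pow m_assoc)
    moreover have "r [^] (p ^ j) \<otimes> s \<in> S (Suc j)" unfolding SS using cr bs by force
    ultimately show ?case using cr by blast
  qed
  have "A \<subseteq> S m"
  proof
    fix a assume a: "a \<in> A"
    then obtain b s where bs: "b \<in> A" "s \<in> S m" "a = b [^] (p ^ m) \<otimes> s" using Srep by blast
    have "s \<in> carrier G" using bs(2) Sc by blast
    then have "a = s" using A1[OF bs(1)] bs(3) by simp
    then show "a \<in> S m" using bs by simp
  qed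
  then have "finite A" using Sfin finite_subset by blast
  then show False using inf unfolding A_def by blast
qed



definition phom :: "('a, 'b) monoid_scheme \<Rightarrow> ('c, 'd) monoid_scheme \<Rightarrow> nat \<Rightarrow> ('a \<times> 'c) set \<Rightarrow> bool" where
  "phom G W p R \<longleftrightarrow> R \<subseteq> carrier G \<times> carrier W \<and> (\<one>\<^bsub>G\<^esub>, \<one>\<^bsub>W\<^esub>) \<in> R \<and>
     (\<forall>a b c d. (a,b) \<in> R \<longrightarrow> (c,d) \<in> R \<longrightarrow> (a \<otimes>\<^bsub>G\<^esub> c, b \<otimes>\<^bsub>W\<^esub> d) \<in> R) \<and>
     (\<forall>a b. (a,b) \<in> R \<longrightarrow> (inv\<^bsub>G\<^esub> a, inv\<^bsub>W\<^esub> b) \<in> R) \<and>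
     (\<forall>a b c. (a,b) \<in> R \<longrightarrow> (a,c) \<in> R \<longrightarrow> b = c) \<and>
     (\<forall>z\<in>carrier G. (z [^]\<^bsub>G\<^esub> p, \<one>\<^bsub>W\<^esub>) \<in> R)"

definition pext :: "('a, 'b) monoid_scheme \<Rightarrow> ('c, 'd) monoid_scheme \<Rightarrow> ('a \<times> 'c) set \<Rightarrow> 'a \<Rightarrow> 'c \<Rightarrow> ('a \<times> 'c) set" where
  "pext G W R y w = {(a \<otimes>\<^bsub>G\<^esub> y [^]\<^bsub>G\<^esub> (k::nat), b \<otimes>\<^bsub>W\<^esub> w [^]\<^bsub>W\<^esub> k) | a b k. (a,b) \<in> R}"

lemma pextI: "(a,b) \<in> R \<Longrightarrow> (a \<otimes>\<^bsub>G\<^esub> y [^]\<^bsub>G\<^esub> (k::nat), b \<otimes>\<^bsub>W\<^esub> w [^]\<^bsub>W\<^esub> k) \<in> pext G W R y w"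
  unfolding pext_def by blast

lemma pextE: "x \<in> pext G W R y w \<Longrightarrow> (\<And>a b k. (a,b) \<in> R \<Longrightarrow> x = (a \<otimes>\<^bsub>G\<^esub> y [^]\<^bsub>G\<^esub> (k::nat), b \<otimes>\<^bsub>W\<^esub> w [^]\<^bsub>W\<^esub> k) \<Longrightarrow> P) \<Longrightarrow> P"
  unfolding pext_def by blast

lemma phom_pow:
  assumes "phom G W p R" "(a,b) \<in> R"
  shows "(a [^]\<^bsub>G\<^esub> (k::nat), b [^]\<^bsub>W\<^esub> k) \<in> R"
  using assms by (induction k) (auto simp: phom_def)

lemma phom_dvd:
  assumes G: "comm_group G" and p: "Factorial_Ring.prime (p::nat)" and R: "phom G W p R"
    and y: "y \<in> carrier G" "y \<notin> Domain R" and j: "y [^]\<^bsub>G\<^esub> (j::nat) \<in> Domain R"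
  shows "p dvd j"
proof (rule ccontr)
  interpret G: comm_group G by (rule G)
  assume nd: "\<not> p dvd j"
  then have j0: "j \<noteq> 0" by (metis dvd_0_right)
  have "coprime j p" using nd p by (metis prime_imp_coprime coprime_commute)
  then have "gcd j p = 1" by simp
  then obtain x t where xt: "j * x = p * t + 1" using bezout_nat[OF j0, of p] by auto
  obtain c where c: "(y [^]\<^bsub>G\<^esub> j, c) \<in> R" using j by auto
  have c1: "((y [^]\<^bsub>G\<^esub> j) [^]\<^bsub>G\<^esub> x, c [^]\<^bsub>W\<^esub> x) \<in> R" by (rule phom_pow[OF R c])
  have c2: "((y [^]\<^bsub>G\<^esub> p) [^]\<^bsub>G\<^esub> t, \<one>\<^bsub>W\<^esub> [^]\<^bsub>W\<^esub> t) \<in> R"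
    by (rule phom_pow[OF R]) (use R y in \<open>auto simp: phom_def\<close>)
  then have c3: "(inv\<^bsub>G\<^esub> ((y [^]\<^bsub>G\<^esub> p) [^]\<^bsub>G\<^esub> t), inv\<^bsub>W\<^esub> (\<one>\<^bsub>W\<^esub> [^]\<^bsub>W\<^esub> t)) \<in> R"
    using R by (auto simp: phom_def)
  have c4: "(inv\<^bsub>G\<^esub> ((y [^]\<^bsub>G\<^esub> p) [^]\<^bsub>G\<^esub> t) \<otimes>\<^bsub>G\<^esub> (y [^]\<^bsub>G\<^esub> j) [^]\<^bsub>G\<^esub> x,
       inv\<^bsub>W\<^esub> (\<one>\<^bsub>W\<^esub> [^]\<^bsub>W\<^esub> t) \<otimes>\<^bsub>W\<^esub> c [^]\<^bsub>W\<^esub> x) \<in> R"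
    using R c1 c3 by (auto simp: phom_def)
  have "(y [^]\<^bsub>G\<^esub> j) [^]\<^bsub>G\<^esub> x = (y [^]\<^bsub>G\<^esub> p) [^]\<^bsub>G\<^esub> t \<otimes>\<^bsub>G\<^esub> y"
    using y xt by (simp add: G.nat_pow_pow G.nat_pow_mult[symmetric])
  then have "inv\<^bsub>G\<^esub> ((y [^]\<^bsub>G\<^esub> p) [^]\<^bsub>G\<^esub> t) \<otimes>\<^bsub>G\<^esub> (y [^]\<^bsub>G\<^esub> j) [^]\<^bsub>G\<^esub> x = y"
    using y by (simp add: G.m_assoc[symmetric])
  then show False using c4 y by (metis Domain.DomainI)
qed

lemma pext_phom:
  assumes G: "comm_group G" and W: "comm_group W" and p: "Factorial_Ring.prime (p::nat)"
    and Wexp: "\<And>w. w \<in> carrier W \<Longrightarrow> w [^]\<^bsub>W\<^esub> p = \<one>\<^bsub>W\<^esub>"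
    and R: "phom G W p R" and y: "y \<in> carrier G" "y \<notin> Domain R" and w: "w \<in> carrier W"
  shows "phom G W p (pext G W R y w)" "R \<subseteq> pext G W R y w" "(y, w) \<in> pext G W R y w"
proof -
  interpret G: comm_group G by (rule G)
  interpret W: comm_group W by (rule W)
  have Rc: "\<And>a b. (a,b) \<in> R \<Longrightarrow> a \<in> carrier G \<and> b \<in> carrier W" using R by (auto simp: phom_def)
  have R1: "(\<one>\<^bsub>G\<^esub>, \<one>\<^bsub>W\<^esub>) \<in> R" using R by (simp add: phom_def)
  have Rm: "\<And>a b c d. (a,b) \<in> R \<Longrightarrow> (c,d) \<in> R \<Longrightarrow> (a \<otimes>\<^bsub>G\<^esub> c, b \<otimes>\<^bsub>W\<^esub> d) \<in> R"
    using R by (simp add: phom_def)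
  have Ri: "\<And>a b. (a,b) \<in> R \<Longrightarrow> (inv\<^bsub>G\<^esub> a, inv\<^bsub>W\<^esub> b) \<in> R" using R by (simp add: phom_def)
  have Rf: "\<And>a b c. (a,b) \<in> R \<Longrightarrow> (a,c) \<in> R \<Longrightarrow> b = c" using R by (simp add: phom_def)
  have Rp: "\<And>z. z \<in> carrier G \<Longrightarrow> (z [^]\<^bsub>G\<^esub> p, \<one>\<^bsub>W\<^esub>) \<in> R" using R by (simp add: phom_def)
  have p1: "p \<ge> 1" using p prime_gt_0_nat by (simp add: Suc_le_eq)
  have pk: "\<And>k. (p - 1) * k + k = p * k" using p1 by (cases p) auto
  let ?E = "pext G W R y w"
  show sub: "R \<subseteq> ?E"
  proof
    fix x assume "x \<in> R"
    then obtain a b where ab: "x = (a,b)" "(a,b) \<in> R" by (cases x) auto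
    have "(a \<otimes>\<^bsub>G\<^esub> y [^]\<^bsub>G\<^esub> (0::nat), b \<otimes>\<^bsub>W\<^esub> w [^]\<^bsub>W\<^esub> (0::nat)) \<in> ?E" by (rule pextI[OF ab(2)])
    then show "x \<in> ?E" using ab Rc by simp
  qed
  have "(\<one>\<^bsub>G\<^esub> \<otimes>\<^bsub>G\<^esub> y [^]\<^bsub>G\<^esub> (1::nat), \<one>\<^bsub>W\<^esub> \<otimes>\<^bsub>W\<^esub> w [^]\<^bsub>W\<^esub> (1::nat)) \<in> ?E" by (rule pextI[OF R1])
  then show "(y, w) \<in> ?E" using y w by simp
  show "phom G W p ?E"
    unfolding phom_def
  proof (intro conjI allI impI ballI)
    show "?E \<subseteq> carrier G \<times> carrier W"
      using Rc y w by (auto elim!: pextE)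
    show "(\<one>\<^bsub>G\<^esub>, \<one>\<^bsub>W\<^esub>) \<in> ?E" using sub R1 by blast
    show "(z [^]\<^bsub>G\<^esub> p, \<one>\<^bsub>W\<^esub>) \<in> ?E" if "z \<in> carrier G" for z using sub Rp that by blast
  next
    fix a b c d assume ab: "(a,b) \<in> ?E" and cd: "(c,d) \<in> ?E"
    from ab obtain a1 b1 k where k: "(a1,b1) \<in> R" "(a,b) = (a1 \<otimes>\<^bsub>G\<^esub> y [^]\<^bsub>G\<^esub> (k::nat), b1 \<otimes>\<^bsub>W\<^esub> w [^]\<^bsub>W\<^esub> k)"
      by (erule pextE)
    from cd obtain c1 d1 l where l: "(c1,d1) \<in> R" "(c,d) = (c1 \<otimes>\<^bsub>G\<^esub> y [^]\<^bsub>G\<^esub> (l::nat), d1 \<otimes>\<^bsub>W\<^esub> w [^]\<^bsub>W\<^esub> l)"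
      by (erule pextE)
    have "((a1 \<otimes>\<^bsub>G\<^esub> c1) \<otimes>\<^bsub>G\<^esub> y [^]\<^bsub>G\<^esub> (k + l), (b1 \<otimes>\<^bsub>W\<^esub> d1) \<otimes>\<^bsub>W\<^esub> w [^]\<^bsub>W\<^esub> (k + l)) \<in> ?E"
      by (rule pextI[OF Rm[OF k(1) l(1)]])
    moreover have "(a1 \<otimes>\<^bsub>G\<^esub> c1) \<otimes>\<^bsub>G\<^esub> y [^]\<^bsub>G\<^esub> (k + l) = a \<otimes>\<^bsub>G\<^esub> c"
      using k l Rc[OF k(1)] Rc[OF l(1)] y by (simp add: G.nat_pow_mult[symmetric] G.m_ac)
    moreover have "(b1 \<otimes>\<^bsub>W\<^esub> d1) \<otimes>\<^bsub>W\<^esub> w [^]\<^bsub>W\<^esub> (k + l) = b \<otimes>\<^bsub>W\<^esub> d"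
      using k l Rc[OF k(1)] Rc[OF l(1)] w by (simp add: W.nat_pow_mult[symmetric] W.m_ac)
    ultimately show "(a \<otimes>\<^bsub>G\<^esub> c, b \<otimes>\<^bsub>W\<^esub> d) \<in> ?E" by simp
  next
    fix a b assume ab: "(a,b) \<in> ?E"
    from ab obtain a1 b1 k where k: "(a1,b1) \<in> R" "(a,b) = (a1 \<otimes>\<^bsub>G\<^esub> y [^]\<^bsub>G\<^esub> (k::nat), b1 \<otimes>\<^bsub>W\<^esub> w [^]\<^bsub>W\<^esub> k)"
      by (erule pextE)
    have a1: "a1 \<in> carrier G" and b1: "b1 \<in> carrier W" using Rc[OF k(1)] by auto
    have yp: "((y [^]\<^bsub>G\<^esub> p) [^]\<^bsub>G\<^esub> k, \<one>\<^bsub>W\<^esub> [^]\<^bsub>W\<^esub> k) \<in> R" by (rule phom_pow[OF R Rp[OF y(1)]])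
    have r: "(inv\<^bsub>G\<^esub> a1 \<otimes>\<^bsub>G\<^esub> inv\<^bsub>G\<^esub> ((y [^]\<^bsub>G\<^esub> p) [^]\<^bsub>G\<^esub> k), inv\<^bsub>W\<^esub> b1 \<otimes>\<^bsub>W\<^esub> inv\<^bsub>W\<^esub> (\<one>\<^bsub>W\<^esub> [^]\<^bsub>W\<^esub> k)) \<in> R"
      by (rule Rm[OF Ri[OF k(1)] Ri[OF yp]])
    have e1: "(inv\<^bsub>G\<^esub> a1 \<otimes>\<^bsub>G\<^esub> inv\<^bsub>G\<^esub> ((y [^]\<^bsub>G\<^esub> p) [^]\<^bsub>G\<^esub> k)) \<otimes>\<^bsub>G\<^esub> y [^]\<^bsub>G\<^esub> ((p - 1) * k) = inv\<^bsub>G\<^esub> a"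
    proof -
      have "(y [^]\<^bsub>G\<^esub> p) [^]\<^bsub>G\<^esub> k = y [^]\<^bsub>G\<^esub> ((p - 1) * k) \<otimes>\<^bsub>G\<^esub> y [^]\<^bsub>G\<^esub> k"
        using y pk by (simp add: G.nat_pow_pow G.nat_pow_mult)
      then show ?thesis using k a1 y by (simp add: G.inv_mult G.m_ac)
    qed
    have e2: "(inv\<^bsub>W\<^esub> b1 \<otimes>\<^bsub>W\<^esub> inv\<^bsub>W\<^esub> (\<one>\<^bsub>W\<^esub> [^]\<^bsub>W\<^esub> k)) \<otimes>\<^bsub>W\<^esub> w [^]\<^bsub>W\<^esub> ((p - 1) * k) = inv\<^bsub>W\<^esub> b"
    proof -
      have "w [^]\<^bsub>W\<^esub> ((p - 1) * k) \<otimes>\<^bsub>W\<^esub> w [^]\<^bsub>W\<^esub> k = (w [^]\<^bsub>W\<^esub> p) [^]\<^bsub>W\<^esub> k"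
        using w pk by (simp add: W.nat_pow_pow W.nat_pow_mult)
      also have "\<dots> = \<one>\<^bsub>W\<^esub>" using Wexp[OF w] by simp
      finally have "w [^]\<^bsub>W\<^esub> ((p - 1) * k) = inv\<^bsub>W\<^esub> (w [^]\<^bsub>W\<^esub> k)"
        using w by (simp add: W.inv_equality)
      then show ?thesis using k b1 w by (simp add: W.inv_mult)
    qed
    show "(inv\<^bsub>G\<^esub> a, inv\<^bsub>W\<^esub> b) \<in> ?E" using pextI[OF r, of G y "(p - 1) * k" W w] e1 e2 by simp
  next
    fix a b c assume ab: "(a,b) \<in> ?E" and ac: "(a,c) \<in> ?E"
    have key: "b1 \<otimes>\<^bsub>W\<^esub> w [^]\<^bsub>W\<^esub> k = d1 \<otimes>\<^bsub>W\<^esub> w [^]\<^bsub>W\<^esub> l"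
      if R1: "(a1,b1) \<in> R" and R2: "(c1,d1) \<in> R" and lk: "(l::nat) \<le> k"
        and eq: "a1 \<otimes>\<^bsub>G\<^esub> y [^]\<^bsub>G\<^esub> k = c1 \<otimes>\<^bsub>G\<^esub> y [^]\<^bsub>G\<^esub> l" for a1 b1 c1 d1 k l
    proof -
      have a1: "a1 \<in> carrier G" and b1: "b1 \<in> carrier W" using Rc[OF R1] by auto
      have c1: "c1 \<in> carrier G" and d1: "d1 \<in> carrier W" using Rc[OF R2] by auto
      obtain j where kj: "k = l + j" using lk le_Suc_ex by blast
      have "y [^]\<^bsub>G\<^esub> k = y [^]\<^bsub>G\<^esub> j \<otimes>\<^bsub>G\<^esub> y [^]\<^bsub>G\<^esub> l"
        using kj y G.nat_pow_mult[of y j l] by (simp add: add.commute)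
      then have "(a1 \<otimes>\<^bsub>G\<^esub> y [^]\<^bsub>G\<^esub> j) \<otimes>\<^bsub>G\<^esub> y [^]\<^bsub>G\<^esub> l = c1 \<otimes>\<^bsub>G\<^esub> y [^]\<^bsub>G\<^esub> l"
        using eq a1 y by (simp add: G.m_assoc)
      then have "a1 \<otimes>\<^bsub>G\<^esub> y [^]\<^bsub>G\<^esub> j = c1" using a1 c1 y by (simp add: G.r_cancel)
      then have yj: "y [^]\<^bsub>G\<^esub> j = inv\<^bsub>G\<^esub> a1 \<otimes>\<^bsub>G\<^esub> c1" using a1 c1 y
        by (subst G.inv_solve_left) auto
      have r: "(inv\<^bsub>G\<^esub> a1 \<otimes>\<^bsub>G\<^esub> c1, inv\<^bsub>W\<^esub> b1 \<otimes>\<^bsub>W\<^esub> d1) \<in> R" by (rule Rm[OF Ri[OF R1] R2])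
      then have "y [^]\<^bsub>G\<^esub> j \<in> Domain R" using yj by auto
      then have "p dvd j" by (rule phom_dvd[OF G p R y])
      then obtain t where jt: "j = p * t" by blast
      have "((y [^]\<^bsub>G\<^esub> p) [^]\<^bsub>G\<^esub> t, \<one>\<^bsub>W\<^esub> [^]\<^bsub>W\<^esub> t) \<in> R" by (rule phom_pow[OF R Rp[OF y(1)]])
      then have "(inv\<^bsub>G\<^esub> a1 \<otimes>\<^bsub>G\<^esub> c1, \<one>\<^bsub>W\<^esub>) \<in> R" using yj jt y by (simp add: G.nat_pow_pow)
      then have "inv\<^bsub>W\<^esub> b1 \<otimes>\<^bsub>W\<^esub> d1 = \<one>\<^bsub>W\<^esub>" using Rf r by blast
      then have bd: "d1 = b1" using b1 d1 by (subst (asm) W.inv_solve_left') auto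
      have "w [^]\<^bsub>W\<^esub> j = \<one>\<^bsub>W\<^esub>" using jt Wexp[OF w] w by (simp add: W.nat_pow_pow[symmetric])
      moreover have "w [^]\<^bsub>W\<^esub> k = w [^]\<^bsub>W\<^esub> l \<otimes>\<^bsub>W\<^esub> w [^]\<^bsub>W\<^esub> j"
        using kj w W.nat_pow_mult[of w l j] by simp
      ultimately have "w [^]\<^bsub>W\<^esub> k = w [^]\<^bsub>W\<^esub> l" using w by simp
      then show ?thesis using bd by simp
    qed
    from ab obtain a1 b1 k where k: "(a1,b1) \<in> R" "(a,b) = (a1 \<otimes>\<^bsub>G\<^esub> y [^]\<^bsub>G\<^esub> (k::nat), b1 \<otimes>\<^bsub>W\<^esub> w [^]\<^bsub>W\<^esub> k)"
      by (erule pextE)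
    from ac obtain c1 d1 l where l: "(c1,d1) \<in> R" "(a,c) = (c1 \<otimes>\<^bsub>G\<^esub> y [^]\<^bsub>G\<^esub> (l::nat), d1 \<otimes>\<^bsub>W\<^esub> w [^]\<^bsub>W\<^esub> l)"
      by (erule pextE)
    show "b = c"
    proof (cases "l \<le> k")
      case True then show ?thesis using key[OF k(1) l(1) True] k l by simp
    next
      case False
      then have kl: "k \<le> l" by simp
      show ?thesis using key[OF l(1) k(1) kl] k l by simp
    qed
  qed
qed



lemma phomD:
  assumes "phom G W p R"
  shows "R \<subseteq> carrier G \<times> carrier W" "(\<one>\<^bsub>G\<^esub>, \<one>\<^bsub>W\<^esub>) \<in> R"
    "\<And>a b c d. (a,b) \<in> R \<Longrightarrow> (c,d) \<in> R \<Longrightarrow> (a \<otimes>\<^bsub>G\<^esub> c, b \<otimes>\<^bsub>W\<^esub> d) \<in> R"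
    "\<And>a b. (a,b) \<in> R \<Longrightarrow> (inv\<^bsub>G\<^esub> a, inv\<^bsub>W\<^esub> b) \<in> R"
    "\<And>a b c. (a,b) \<in> R \<Longrightarrow> (a,c) \<in> R \<Longrightarrow> b = c"
    "\<And>z. z \<in> carrier G \<Longrightarrow> (z [^]\<^bsub>G\<^esub> p, \<one>\<^bsub>W\<^esub>) \<in> R"
  using assms unfolding phom_def by blast+

lemma phom_chain_union:
  assumes C: "C \<noteq> {}" "\<And>Q. Q \<in> C \<Longrightarrow> phom G W p Q" and ch: "\<And>Q1 Q2. Q1 \<in> C \<Longrightarrow> Q2 \<in> C \<Longrightarrow> Q1 \<subseteq> Q2 \<or> Q2 \<subseteq> Q1"
  shows "phom G W p (\<Union>C)"
proof -
  obtain Xs0 where Xs0: "Xs0 \<in> C" using C by blast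
  have two: "\<exists>Xs\<in>C. u \<in> Xs \<and> v \<in> Xs" if uv: "u \<in> \<Union>C" "v \<in> \<Union>C" for u v
  proof -
    obtain Xs Y where "Xs \<in> C" "Y \<in> C" "u \<in> Xs" "v \<in> Y" using uv by blast
    then show ?thesis using ch[of Xs Y] by blast
  qed
  show ?thesis unfolding phom_def
  proof (intro conjI allI impI ballI)
    show "\<Union>C \<subseteq> carrier G \<times> carrier W" using phomD(1)[OF C(2)] by blast
    show "(\<one>\<^bsub>G\<^esub>, \<one>\<^bsub>W\<^esub>) \<in> \<Union>C" using Xs0 phomD(2)[OF C(2)[OF Xs0]] by blast
    show "(z [^]\<^bsub>G\<^esub> p, \<one>\<^bsub>W\<^esub>) \<in> \<Union>C" if "z \<in> carrier G" for z
      using Xs0 phomD(6)[OF C(2)[OF Xs0] that] by blast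
  next
    fix a b c d assume "(a,b) \<in> \<Union>C" "(c,d) \<in> \<Union>C"
    then obtain Xs where "Xs \<in> C" "(a,b) \<in> Xs" "(c,d) \<in> Xs" using two by blast
    then show "(a \<otimes>\<^bsub>G\<^esub> c, b \<otimes>\<^bsub>W\<^esub> d) \<in> \<Union>C" using phomD(3)[OF C(2)] by blast
  next
    fix a b assume "(a,b) \<in> \<Union>C"
    then obtain Xs where "Xs \<in> C" "(a,b) \<in> Xs" by blast
    then show "(inv\<^bsub>G\<^esub> a, inv\<^bsub>W\<^esub> b) \<in> \<Union>C" using phomD(4)[OF C(2)] by blast
  next
    fix a b c assume "(a,b) \<in> \<Union>C" "(a,c) \<in> \<Union>C"
    then obtain Xs where "Xs \<in> C" "(a,b) \<in> Xs" "(a,c) \<in> Xs" using two by blast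
    then show "b = c" using phomD(5)[OF C(2)] by blast
  qed
qed

lemma phom_total:
  assumes G: "comm_group G" and W: "comm_group W" and p: "Factorial_Ring.prime (p::nat)"
    and Wexp: "\<And>w. w \<in> carrier W \<Longrightarrow> w [^]\<^bsub>W\<^esub> p = \<one>\<^bsub>W\<^esub>"
    and R0: "phom G W p R0"
  shows "\<exists>M. phom G W p M \<and> R0 \<subseteq> M \<and> Domain M = carrier G"
proof -
  define A where "A = {R. phom G W p R \<and> R0 \<subseteq> R}"
  have "\<forall>C\<in>chains A. \<exists>U\<in>A. \<forall>Xs\<in>C. Xs \<subseteq> U"
  proof
    fix C assume C: "C \<in> chains A"
    show "\<exists>U\<in>A. \<forall>Xs\<in>C. Xs \<subseteq> U"
    proof (cases "C = {}")
      case True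
      have "R0 \<in> A" using R0 unfolding A_def by blast
      then show ?thesis using True by blast
    next
      case False
      have "phom G W p (\<Union>C)"
      proof (rule phom_chain_union[OF False])
        show "\<And>Q. Q \<in> C \<Longrightarrow> phom G W p Q" using C unfolding chains_def A_def by blast
        show "\<And>Q1 Q2. Q1 \<in> C \<Longrightarrow> Q2 \<in> C \<Longrightarrow> Q1 \<subseteq> Q2 \<or> Q2 \<subseteq> Q1"
          using C unfolding chains_def chain_subset_def by blast
      qed
      moreover have "R0 \<subseteq> \<Union>C" using False C unfolding chains_def A_def by blast
      ultimately show ?thesis by (auto simp: A_def)
    qed
  qed
  then obtain M where M: "M \<in> A" and max: "\<And>Xs. Xs \<in> A \<Longrightarrow> M \<subseteq> Xs \<Longrightarrow> Xs = M"
    using Zorn_Lemma2[of A] by metis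
  have Mp: "phom G W p M" and M0: "R0 \<subseteq> M" using M unfolding A_def by blast+
  have "Domain M = carrier G"
  proof
    show "Domain M \<subseteq> carrier G" using phomD(1)[OF Mp] by blast
    show "carrier G \<subseteq> Domain M"
    proof
      fix y assume y: "y \<in> carrier G"
      show "y \<in> Domain M"
      proof (rule ccontr)
        assume ny: "y \<notin> Domain M"
        interpret W: comm_group W by (rule W)
        have w: "\<one>\<^bsub>W\<^esub> \<in> carrier W" by simp
        note e = pext_phom[OF G W p Wexp Mp y ny w]
        have "pext G W M y \<one>\<^bsub>W\<^esub> \<in> A" using e(1) e(2) M0 unfolding A_def by blast
        then have "pext G W M y \<one>\<^bsub>W\<^esub> = M" by (rule max[OF _ e(2)])
        then have "(y, \<one>\<^bsub>W\<^esub>) \<in> M" using e(3) by simp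
        then show False using ny by blast
      qed
    qed
  qed
  then show ?thesis using Mp M0 by blast
qed

lemma phom_to_hom:
  assumes G: "comm_group G" and W: "comm_group W" and M: "phom G W p M" and D: "Domain M = carrier G"
  shows "(\<lambda>x. THE b. (x,b) \<in> M) \<in> hom G W" "\<And>x b. (x,b) \<in> M \<Longrightarrow> (THE b. (x,b) \<in> M) = b"
proof -
  have f: "\<And>a b c. (a,b) \<in> M \<Longrightarrow> (a,c) \<in> M \<Longrightarrow> b = c" by (rule phomD(5)[OF M])
  show th: "\<And>x b. (x,b) \<in> M \<Longrightarrow> (THE b. (x,b) \<in> M) = b"
    using f by (blast intro: the_equality)
  have ex: "\<And>x. x \<in> carrier G \<Longrightarrow> (x, THE b. (x,b) \<in> M) \<in> M"
  proof -
    fix x assume "x \<in> carrier G"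
    then obtain b where "(x,b) \<in> M" using D by blast
    then show "(x, THE b. (x,b) \<in> M) \<in> M" using th by simp
  qed
  show "(\<lambda>x. THE b. (x,b) \<in> M) \<in> hom G W"
  proof (rule homI)
    fix x assume x: "x \<in> carrier G"
    show "(THE b. (x,b) \<in> M) \<in> carrier W" using ex[OF x] phomD(1)[OF M] by blast
  next
    fix x y assume x: "x \<in> carrier G" and y: "y \<in> carrier G"
    have "(x \<otimes>\<^bsub>G\<^esub> y, (THE b. (x,b) \<in> M) \<otimes>\<^bsub>W\<^esub> (THE b. (y,b) \<in> M)) \<in> M"
      using ex[OF x] ex[OF y] by (rule phomD(3)[OF M])
    then show "(THE b. (x \<otimes>\<^bsub>G\<^esub> y, b) \<in> M) = (THE b. (x,b) \<in> M) \<otimes>\<^bsub>W\<^esub> (THE b. (y,b) \<in> M)"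
      by (rule th)
  qed
qed



definition pgood :: "('a, 'b) monoid_scheme \<Rightarrow> ('c, 'd) monoid_scheme \<Rightarrow> nat \<Rightarrow> ('a \<times> 'c) set \<Rightarrow> bool" where
  "pgood G W p R \<longleftrightarrow> phom G W p R \<and> (\<exists>F. finite F \<and> F \<subseteq> carrier G \<and>
      Domain R \<subseteq> {x. \<exists>z\<in>carrier G. \<exists>f\<in>F. x = z [^]\<^bsub>G\<^esub> p \<otimes>\<^bsub>G\<^esub> f})"

lemma exists_hom_hitting:
  fixes G :: "('a, 'b) monoid_scheme" and W :: "('c, 'd) monoid_scheme" and e :: "nat \<Rightarrow> 'c"
  assumes G: "comm_group G" and W: "comm_group W" and p: "Factorial_Ring.prime (p::nat)"
    and Wexp: "\<And>w. w \<in> carrier W \<Longrightarrow> w [^]\<^bsub>W\<^esub> p = \<one>\<^bsub>W\<^esub>"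
    and e: "\<And>n. e n \<in> carrier W"
    and idx: "\<And>F. finite F \<Longrightarrow> F \<subseteq> carrier G \<Longrightarrow>
                 \<exists>y\<in>carrier G. \<forall>z\<in>carrier G. \<forall>f\<in>F. y \<noteq> z [^]\<^bsub>G\<^esub> p \<otimes>\<^bsub>G\<^esub> f"
  shows "\<exists>\<psi> \<in> hom G W. \<forall>n. e n \<in> \<psi> ` carrier G"
proof -
  interpret G: comm_group G by (rule G)
  interpret W: comm_group W by (rule W)
  have p0: "p > 0" using p prime_gt_0_nat by blast
  define R0 where "R0 = {(z [^]\<^bsub>G\<^esub> p, \<one>\<^bsub>W\<^esub>) | z. z \<in> carrier G}"
  have R0: "phom G W p R0"
    unfolding phom_def
  proof (intro conjI allI impI ballI)
    show "R0 \<subseteq> carrier G \<times> carrier W" by (auto simp: R0_def)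
    have "\<one>\<^bsub>G\<^esub> = \<one>\<^bsub>G\<^esub> [^]\<^bsub>G\<^esub> p" by simp
    then show "(\<one>\<^bsub>G\<^esub>, \<one>\<^bsub>W\<^esub>) \<in> R0" unfolding R0_def by blast
    show "(z [^]\<^bsub>G\<^esub> p, \<one>\<^bsub>W\<^esub>) \<in> R0" if "z \<in> carrier G" for z using that unfolding R0_def by blast
  next
    fix a b c d assume "(a,b) \<in> R0" "(c,d) \<in> R0"
    then obtain z1 z2 where z: "z1 \<in> carrier G" "z2 \<in> carrier G" "a = z1 [^]\<^bsub>G\<^esub> p" "c = z2 [^]\<^bsub>G\<^esub> p"
      "b = \<one>\<^bsub>W\<^esub>" "d = \<one>\<^bsub>W\<^esub>" unfolding R0_def by blast
    then have "a \<otimes>\<^bsub>G\<^esub> c = (z1 \<otimes>\<^bsub>G\<^esub> z2) [^]\<^bsub>G\<^esub> p" "b \<otimes>\<^bsub>W\<^esub> d = \<one>\<^bsub>W\<^esub>"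
      by (simp_all add: G.nat_pow_distrib)
    then show "(a \<otimes>\<^bsub>G\<^esub> c, b \<otimes>\<^bsub>W\<^esub> d) \<in> R0" using z unfolding R0_def by blast
  next
    fix a b assume "(a,b) \<in> R0"
    then obtain z1 where z: "z1 \<in> carrier G" "a = z1 [^]\<^bsub>G\<^esub> p" "b = \<one>\<^bsub>W\<^esub>" unfolding R0_def by blast
    then have "inv\<^bsub>G\<^esub> a = (inv\<^bsub>G\<^esub> z1) [^]\<^bsub>G\<^esub> p" "inv\<^bsub>W\<^esub> b = \<one>\<^bsub>W\<^esub>"
      by (simp_all add: G.nat_pow_inv)
    then show "(inv\<^bsub>G\<^esub> a, inv\<^bsub>W\<^esub> b) \<in> R0" using z unfolding R0_def by blast
  next
    fix a b c assume "(a,b) \<in> R0" "(a,c) \<in> R0"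
    then show "b = c" unfolding R0_def by blast
  qed
  define ysel :: "('a \<times> 'c) set \<Rightarrow> 'a" where "ysel = (\<lambda>R. SOME y. y \<in> carrier G \<and> y \<notin> Domain R)"
  define Rs where "Rs = rec_nat R0 (\<lambda>n R. pext G W R (ysel R) (e n))"
  have Rs0: "Rs 0 = R0" and RsS: "\<And>n. Rs (Suc n) = pext G W (Rs n) (ysel (Rs n)) (e n)"
    by (simp_all add: Rs_def)
  have ystep: "ysel R \<in> carrier G \<and> ysel R \<notin> Domain R" if Rg: "pgood G W p R" for R
  proof -
    have "\<exists>F. finite F \<and> F \<subseteq> carrier G \<and>
      Domain R \<subseteq> {x. \<exists>z\<in>carrier G. \<exists>f\<in>F. x = z [^]\<^bsub>G\<^esub> p \<otimes>\<^bsub>G\<^esub> f}"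
      using Rg unfolding pgood_def by (rule conjunct2)
    then obtain F where F1: "finite F" and F2: "F \<subseteq> carrier G" and
      F3: "Domain R \<subseteq> {x. \<exists>z\<in>carrier G. \<exists>f\<in>F. x = z [^]\<^bsub>G\<^esub> p \<otimes>\<^bsub>G\<^esub> f}"
      by (elim exE conjE)
    obtain y where y1: "y \<in> carrier G" and y2: "\<forall>z\<in>carrier G. \<forall>f\<in>F. y \<noteq> z [^]\<^bsub>G\<^esub> p \<otimes>\<^bsub>G\<^esub> f"
      using idx[OF F1 F2] by (elim bexE)
    have ny: "y \<notin> Domain R"
    proof
      assume "y \<in> Domain R"
      then have "y \<in> {x. \<exists>z\<in>carrier G. \<exists>f\<in>F. x = z [^]\<^bsub>G\<^esub> p \<otimes>\<^bsub>G\<^esub> f}" by (rule subsetD[OF F3])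
      then show False using y2 by simp
    qed
    have "\<exists>y. y \<in> carrier G \<and> y \<notin> Domain R" using y1 ny by (intro exI conjI)
    then show ?thesis unfolding ysel_def by (rule someI_ex)
  qed
  have good_step: "pgood G W p (pext G W R (ysel R) w)" if R: "pgood G W p R" and w: "w \<in> carrier W" for R w
  proof -
    have yR: "ysel R \<in> carrier G" "ysel R \<notin> Domain R" using ystep[OF R] by auto
    define y where "y = ysel R"
    have Rp: "phom G W p R" using R unfolding pgood_def by blast
    obtain F where F: "finite F" "F \<subseteq> carrier G"
      "Domain R \<subseteq> {x. \<exists>z\<in>carrier G. \<exists>f\<in>F. x = z [^]\<^bsub>G\<^esub> p \<otimes>\<^bsub>G\<^esub> f}"
      using R unfolding pgood_def by blast
    have y: "y \<in> carrier G" "y \<notin> Domain R" using yR by (auto simp: y_def)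
    define F' where "F' = (\<lambda>(f, j). f \<otimes>\<^bsub>G\<^esub> y [^]\<^bsub>G\<^esub> (j::nat)) ` (F \<times> {..<p})"
    have F'fin: "finite F'" using F(1) by (simp add: F'_def)
    have F'c: "F' \<subseteq> carrier G" using F(2) y by (auto simp: F'_def)
    have "Domain (pext G W R y w) \<subseteq> {x. \<exists>z\<in>carrier G. \<exists>f\<in>F'. x = z [^]\<^bsub>G\<^esub> p \<otimes>\<^bsub>G\<^esub> f}"
    proof
      fix x assume "x \<in> Domain (pext G W R y w)"
      then obtain b' where "(x, b') \<in> pext G W R y w" by blast
      then obtain a b k where ab0: "(a,b) \<in> R"
        "(x, b') = (a \<otimes>\<^bsub>G\<^esub> y [^]\<^bsub>G\<^esub> (k::nat), b \<otimes>\<^bsub>W\<^esub> w [^]\<^bsub>W\<^esub> k)"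
        by (erule pextE)
      then have ab: "(a,b) \<in> R" "x = a \<otimes>\<^bsub>G\<^esub> y [^]\<^bsub>G\<^esub> k" by simp_all
      have "a \<in> Domain R" using ab by blast
      then have "a \<in> {x. \<exists>z\<in>carrier G. \<exists>f\<in>F. x = z [^]\<^bsub>G\<^esub> p \<otimes>\<^bsub>G\<^esub> f}" by (rule subsetD[OF F(3)])
      then obtain z f where zf: "z \<in> carrier G" "f \<in> F" "a = z [^]\<^bsub>G\<^esub> p \<otimes>\<^bsub>G\<^esub> f" by blast
      have fc: "f \<in> carrier G" using zf F(2) by blast
      have "y [^]\<^bsub>G\<^esub> k = y [^]\<^bsub>G\<^esub> (p * (k div p)) \<otimes>\<^bsub>G\<^esub> y [^]\<^bsub>G\<^esub> (k mod p)"
        using y G.nat_pow_mult[of y "p * (k div p)" "k mod p"] by simp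
      also have "\<dots> = (y [^]\<^bsub>G\<^esub> (k div p)) [^]\<^bsub>G\<^esub> p \<otimes>\<^bsub>G\<^esub> y [^]\<^bsub>G\<^esub> (k mod p)"
        using y G.nat_pow_pow[of y "k div p" p] by (simp add: mult.commute)
      finally have yk: "y [^]\<^bsub>G\<^esub> k = (y [^]\<^bsub>G\<^esub> (k div p)) [^]\<^bsub>G\<^esub> p \<otimes>\<^bsub>G\<^esub> y [^]\<^bsub>G\<^esub> (k mod p)" .
      have "x = (z \<otimes>\<^bsub>G\<^esub> y [^]\<^bsub>G\<^esub> (k div p)) [^]\<^bsub>G\<^esub> p \<otimes>\<^bsub>G\<^esub> (f \<otimes>\<^bsub>G\<^esub> y [^]\<^bsub>G\<^esub> (k mod p))"
        using ab(2) zf(1,3) fc y yk by (simp add: G.nat_pow_distrib G.m_ac)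
      moreover have "f \<otimes>\<^bsub>G\<^esub> y [^]\<^bsub>G\<^esub> (k mod p) \<in> F'"
        using zf(2) p0 unfolding F'_def by force
      moreover have "z \<otimes>\<^bsub>G\<^esub> y [^]\<^bsub>G\<^esub> (k div p) \<in> carrier G" using zf y by simp
      ultimately show "x \<in> {x. \<exists>z\<in>carrier G. \<exists>f\<in>F'. x = z [^]\<^bsub>G\<^esub> p \<otimes>\<^bsub>G\<^esub> f}" unfolding mem_Collect_eq by blast
    qed
    moreover have "phom G W p (pext G W R y w)" by (rule pext_phom(1)[OF G W p Wexp Rp y w])
    ultimately show ?thesis unfolding pgood_def y_def using F'fin F'c by blast
  qed
  have good: "pgood G W p (Rs n)" for n
  proof (induction n)
    case 0
    have "Domain R0 \<subseteq> {x. \<exists>z\<in>carrier G. \<exists>f\<in>{\<one>\<^bsub>G\<^esub>}. x = z [^]\<^bsub>G\<^esub> p \<otimes>\<^bsub>G\<^esub> f}"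
      unfolding R0_def by force
    then show ?case unfolding Rs0 pgood_def using R0 by blast
  next
    case (Suc n)
    show ?case unfolding RsS by (rule good_step[OF Suc e])
  qed
  have incl: "Rs n \<subseteq> Rs (Suc n)" and hit: "(ysel (Rs n), e n) \<in> Rs (Suc n)" for n
  proof -
    have Rp: "phom G W p (Rs n)" using good[of n] unfolding pgood_def by blast
    have yR: "ysel (Rs n) \<in> carrier G" "ysel (Rs n) \<notin> Domain (Rs n)" using ystep[OF good[of n]] by auto
    show "Rs n \<subseteq> Rs (Suc n)" unfolding RsS by (rule pext_phom(2)[OF G W p Wexp Rp yR e])
    show "(ysel (Rs n), e n) \<in> Rs (Suc n)" unfolding RsS by (rule pext_phom(3)[OF G W p Wexp Rp yR e])
  qed
  have mono: "Rs m \<subseteq> Rs n" if "m \<le> n" for m n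
    using that by (rule lift_Suc_mono_le[of Rs, OF incl])
  have Uphom: "phom G W p (\<Union>(range Rs))"
  proof (rule phom_chain_union)
    show "range Rs \<noteq> {}" by simp
    show "\<And>Q. Q \<in> range Rs \<Longrightarrow> phom G W p Q" using good unfolding pgood_def by blast
    show "\<And>Q1 Q2. Q1 \<in> range Rs \<Longrightarrow> Q2 \<in> range Rs \<Longrightarrow> Q1 \<subseteq> Q2 \<or> Q2 \<subseteq> Q1"
      using mono by (metis imageE nat_le_linear)
  qed
  obtain M where M: "phom G W p M" "\<Union>(range Rs) \<subseteq> M" "Domain M = carrier G"
    using phom_total[OF G W p Wexp Uphom] by blast
  note hh = phom_to_hom[OF G W M(1) M(3)]
  show ?thesis
  proof (intro bexI allI)
    show "(\<lambda>x. THE b. (x,b) \<in> M) \<in> hom G W" by (rule hh(1))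
  next
    fix n
    have m: "(ysel (Rs n), e n) \<in> M" using hit[of n] M(2) by blast
    have "ysel (Rs n) \<in> carrier G" using ystep[OF good[of n]] by blast
    moreover have "(THE b. (ysel (Rs n), b) \<in> M) = e n" by (rule hh(2)[OF m])
    ultimately show "e n \<in> (\<lambda>x. THE b. (x,b) \<in> M) ` carrier G" by force
  qed
qed



lemma idx_lemma:
  assumes G: "comm_group G" and red: "reduced G" and p: "Factorial_Ring.prime (p::nat)"
    and inf: "infinite (primary_component G p)"
    and F: "finite F" "F \<subseteq> carrier G"
  shows "\<exists>y\<in>carrier G. \<forall>z\<in>carrier G. \<forall>f\<in>F. y \<noteq> z [^]\<^bsub>G\<^esub> p \<otimes>\<^bsub>G\<^esub> f"
  using comm_group.idx_lemma[OF G red p inf F] .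

theorem proposition5p4:
  fixes G :: "('a, 'b) monoid_scheme"
  assumes "comm_group G"
    and "reduced G"
    and "super_directly_finite G"
    and "\<not> torsion_free G"
  shows "\<forall>p::nat. Factorial_Ring.prime p \<longrightarrow> finite (primary_component G p)"
proof (intro allI impI)
  fix p :: nat assume p: "Factorial_Ring.prime p"
  note G = assms(1)
  interpret G: comm_group G by (rule G)
  show "finite (primary_component G p)"
  proof (rule ccontr)
    assume inf: "infinite (primary_component G p)"
    have p1: "p > 1" using p prime_gt_1_nat by blast
    have W: "comm_group (Wp p)" using p1 by (simp add: Wp_group)
    interpret W: comm_group "Wp p" by (rule W)
    have Wexp: "\<And>w. w \<in> carrier (Wp p) \<Longrightarrow> w [^]\<^bsub>Wp p\<^esub> p = \<one>\<^bsub>Wp p\<^esub>"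
    proof -
      fix w assume w: "w \<in> carrier (Wp p)"
      show "w [^]\<^bsub>Wp p\<^esub> p = \<one>\<^bsub>Wp p\<^esub>" unfolding Wp_pow[OF w] by (simp add: fun_eq_iff)
    qed
    have idx: "\<And>F. finite F \<Longrightarrow> F \<subseteq> carrier G \<Longrightarrow>
                 \<exists>y\<in>carrier G. \<forall>z\<in>carrier G. \<forall>f\<in>F. y \<noteq> z [^]\<^bsub>G\<^esub> p \<otimes>\<^bsub>G\<^esub> f"
      by (rule idx_lemma[OF G assms(2) p inf])
    have "\<exists>\<psi> \<in> hom G (Wp p). \<forall>n. ee n \<in> \<psi> ` carrier G"
      by (rule exists_hom_hitting[OF G W p Wexp ee_carrier[OF p1] idx])
    then obtain \<psi> where psi: "\<psi> \<in> hom G (Wp p)" and hit0: "\<forall>n. ee n \<in> \<psi> ` carrier G"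
      by (elim bexE)
    have hit: "\<And>n. ee n \<in> \<psi> ` carrier G" using hit0 by (rule spec)
    interpret h: group_hom G "Wp p" \<psi> by (unfold_locales, rule psi)
    have surj: "\<psi> ` carrier G = carrier (Wp p)"
    proof
      show "\<psi> ` carrier G \<subseteq> carrier (Wp p)" using h.hom_closed by blast
      show "carrier (Wp p) \<subseteq> \<psi> ` carrier G"
        by (rule Wp_gen[OF p1 h.img_is_subgroup hit])
    qed
    define N where "N = kernel G (Wp p) \<psi>"
    have sN: "subgroup N G" unfolding N_def by (rule h.subgroup_kernel)
    have df: "directly_finite (G Mod N)" using assms(3) sN unfolding super_directly_finite_def by blast
    have "G Mod N \<cong> Wp p" unfolding N_def by (rule h.FactGroup_iso[OF surj])
    then obtain \<phi> where phi: "\<phi> \<in> iso (G Mod N) (Wp p)" unfolding is_iso_def by blast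
    have grp: "group (G Mod N)"
      using G.subgroup_imp_normal[OF sN] by (rule normal.factorgroup_is_group)
    show False using Wp_not_df_iso[OF grp p1 phi] df by blast
  qed
qed


end
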